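(* Let $f_1,\dots,f_m\in\mathbb{C}[x_1,\dots,x_n]$ and consider an action-matrix solver for the action polynomial $f=x_1$, given by the data described in the context: the basis monomials $B_a=\{\mathbf{x}^{\alpha_1},\dots,\mathbf{x}^{\alpha_r}\}$, the reducible monomials $B_r$, the reduced excess monomials $\hat B_e$, the elimination template $\hat{\mathbf{C}}=\begin{bmatrix}\hat{\mathbf{C}}_{11}&\mathbf{C}_{12}&\mathbf{C}_{13}\\ \hat{\mathbf{C}}_{21}&\mathbf{C}_{22}&\mathbf{C}_{23}\end{bmatrix}$ with Gauss–Jordan form $\begin{bmatrix}\mathbf{I}&\mathbf{0}&\hat{\mathbf{C}}'_{13}\\ \mathbf{0}&\mathbf{I}&\mathbf{C}'_{23}\end{bmatrix}$, and the action matrix $\mathbf{M}_f$. Construct the sparse resultant matrix $$\mathbf{M}(u_0)=\begin{bmatrix}\mathbf{A}_{11}&\mathbf{A}_{12}\\ \mathbf{A}_{21}-u_0\mathbf{I}&\mathbf{A}_{22}\end{bmatrix},\qquad \mathbf{A}_{11}=\begin{bmatrix}\mathbf{C}_{13}\\ \mathbf{C}_{23}\end{bmatrix},\quad \mathbf{A}_{12}=\begin{bmatrix}\hat{\mathbf{C}}_{11}&\mathbf{C}_{12}\\ \hat{\mathbf{C}}_{21}&\mathbf{C}_{22}\end{bmatrix},$$ with columns indexed by $\mathbf{b}_1=\mathbf{b}_a$ followed by $\mathbf{b}_2=(\hat{\mathbf{b}}_e,\mathbf{b}_r)$, where the $j$-th row of the lower block $\begin{bmatrix}\mathbf{A}_{21}-u_0\mathbf{I}&\mathbf{A}_{22}\end{bmatrix}$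 is the coefficient vector, with respect to $(\mathbf{b}_1,\mathbf{b}_2)$, of the polynomial $\mathbf{x}^{\alpha_j}(x_1-u_0)$ (here $\mathbf{A}_{21}$ and $\mathbf{A}_{22}$ are $0/1$ matrices), and let $\mathbf{X}=\mathbf{A}_{21}-\mathbf{A}_{22}\mathbf{A}_{12}^{-1}\mathbf{A}_{11}$ be the Schur complement. Then the action-matrix solver and this sparse-resultant solver are equivalent: $\mathbf{X}=\mathbf{M}_f$, and the Gauss–Jordan elimination of $\hat{\mathbf{C}}$ can be replaced by the product $\mathbf{A}_{12}^{-1}\mathbf{A}_{11}$, namely $\mathbf{A}_{12}^{-1}\mathbf{A}_{11}=\begin{bmatrix}\hat{\mathbf{C}}'_{13}\\ \mathbf{C}'_{23}\end{bmatrix}$ (and $\hat{\mathbf{C}}$ has the same size as the upper block $\begin{bmatrix}\mathbf{A}_{11}&\mathbf{A}_{12}\end{bmatrix}$).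
   Context: Action-matrix solver data: $B_a=\{\mathbf{x}^{\alpha_1},\dots,\mathbf{x}^{\alpha_r}\}$ is a set of monomials whose cosets form a linear basis of the quotient ring $\mathbb{C}[x_1,\dots,x_n]/\langle f_1,\dots,f_m\rangle$; $B_r=\{x_1\mathbf{x}^{\alpha}\mid \mathbf{x}^{\alpha}\in B_a\}\setminus B_a$; monomial multiple sets $T_1,\dots,T_m$ give the extended system $\{t f_i : t\in T_i\}$, whose monomials are split as $B_e\sqcup B_r\sqcup B_a$; $\hat B_e\subseteq B_e$ is obtained by deleting excess monomials whose columns are linearly dependent. The elimination template $\hat{\mathbf{C}}$ is the coefficient matrix of the extended system with columns indexed by the ordered vectors $\hat{\mathbf{b}}_e,\mathbf{b}_r,\mathbf{b}_a$ of $\hat B_e,B_r,B_a$ (column blocks as displayed), rows partitioned so that $\mathbf{C}_{22}$ is square invertible, and such that $\begin{bmatrix}\hat{\mathbf{C}}_{11}&\mathbf{C}_{12}\\ \hat{\mathbf{C}}_{21}&\mathbf{C}_{22}\end{bmatrix}$ is square invertible, so its Gauss–Jordan form is $\begin{bmatrix}\mathbf{I}&\mathbf{0}&\hat{\mathbf{C}}'_{13}\\ \mathbf{0}&\mathbf{I}&\mathbf{C}'_{23}\end{bmatrix}$, the rows of $\mathbf{C}'_{23}$ being indexed by the monomials of $\mathbf{b}_r$. The $r\times r$ action matrix $\mathbf{M}_f$ ($f=x_1$) is defined row by row: if $x_1\mathbf{x}^{\alpha_j}=\mathbf{x}^{\alpha_i}\in B_a$, its $j$-th row has $1$ in column $i$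 and $0$ elsewhere; otherwise $x_1\mathbf{x}^{\alpha_j}$ is the $i$-th monomial of $\mathbf{b}_r$ and the $j$-th row of $\mathbf{M}_f$ is the $i$-th row of $-\mathbf{C}'_{23}$. *)

theory Defs
  imports "HOL-Library.Poly_Mapping" "Jordan_Normal_Form.Gauss_Jordan_Elimination"
    "HOL.Complex"
begin

(* Monomials x^alpha are exponent vectors (variable x_{k+1} has index k);
   polynomials in C[x_1,...,x_n] are finitely supported maps from monomials to C. *)
type_synonym mon = "nat \<Rightarrow>\<^sub>0 nat"
type_synonym cpoly = "mon \<Rightarrow>\<^sub>0 complex"

definition xmon :: "mon \<Rightarrow> cpoly" where
  "xmon \<alpha> = Poly_Mapping.single \<alpha> 1"

definition cconst :: "complex \<Rightarrow> cpoly" where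
  "cconst c = Poly_Mapping.single 0 c"

definition e1 :: mon where
  "e1 = Poly_Mapping.single 0 1"

definition x1 :: cpoly where
  "x1 = xmon e1"

definition in_vars :: "nat \<Rightarrow> cpoly \<Rightarrow> bool" where
  "in_vars n p \<longleftrightarrow> (\<forall>\<alpha>\<in>Poly_Mapping.keys p. Poly_Mapping.keys \<alpha> \<subseteq> {..<n})"

definition ideal_gen :: "nat \<Rightarrow> cpoly list \<Rightarrow> cpoly set" where
  "ideal_gen n fs = {(\<Sum>i<length fs. g i * fs ! i) | g. \<forall>i<length fs. in_vars n (g i)}"

definition quotient_basis :: "nat \<Rightarrow> cpoly list \<Rightarrow> mon list \<Rightarrow> bool" where
  "quotient_basis n fs ba \<longleftrightarrow>
     (\<forall>j<length ba. in_vars n (xmon (ba ! j))) \<and>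
     (\<forall>p. in_vars n p \<longrightarrow>
        (\<exists>c::nat \<Rightarrow> complex. p - (\<Sum>j<length ba. Poly_Mapping.single (ba ! j) (c j)) \<in> ideal_gen n fs)) \<and>
     (\<forall>c::nat \<Rightarrow> complex. (\<Sum>j<length ba. Poly_Mapping.single (ba ! j) (c j)) \<in> ideal_gen n fs
        \<longrightarrow> (\<forall>j<length ba. c j = 0))"

end

theory Submission
  imports Defs
begin



lemma ref_restrict:
  assumes C: "C \<in> carrier_mat N M" and K: "K \<le> M" and ref: "row_echelon_form C"
  shows "row_echelon_form (mat N K (\<lambda>(i,j). C $$ (i,j)))"
proof -
  from ref C obtain f where p: "pivot_fun C f M" unfolding row_echelon_form_def by auto
  have d: "dim_row C = N" using C by auto
  note pd = pivot_funD[OF d p]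
  let ?L = "mat N K (\<lambda>(i,j). C $$ (i,j))"
  have "pivot_fun ?L (\<lambda>i. min (f i) K) K"
  proof (rule pivot_funI)
    show "dim_row ?L = N" by simp
    fix i assume i: "i < N"
    show "min (f i) K \<le> K" by simp
    { fix j assume "j < min (f i) K" then show "?L $$ (i,j) = 0" using pd(2)[OF i, of j] i by auto }
    { assume "Suc i < N"
      then show "min (f (Suc i)) K > min (f i) K \<or> min (f (Suc i)) K = K"
        using pd(3)[OF i] pd(1)[of "Suc i"] K by (auto simp: min_def) }
    { assume fi: "min (f i) K < K"
      then have "f i < M" using K by auto
      then show "?L $$ (i, min (f i) K) = 1" using pd(4)[OF i] fi i by (auto simp: min_def split: if_splits)
      fix i' assume "i' < N" "i' \<noteq> i"
      then show "?L $$ (i', min (f i) K) = 0" using pd(5)[OF i \<open>f i < M\<close>] fi i by (auto simp: min_def split: if_splits) }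
  qed
  then show ?thesis unfolding row_echelon_form_def by auto
qed

lemma lookup_x1:
  "Poly_Mapping.lookup (xmon a * (x1 - cconst 0)) m = (if m = a + e1 then 1 else 0)"
  by (simp add: xmon_def x1_def cconst_def mult_single lookup_single)



lemma gj_block:
  assumes Ch: "Ch \<in> carrier_mat N (N + r)"
    and A12: "A12 = mat N N (\<lambda>(i,j). Ch $$ (i,j))"
    and A11: "A11 = mat N r (\<lambda>(i,j). Ch $$ (i,N+j))"
    and inv: "invertible_mat (A12 :: 'a :: field mat)"
  shows "the (mat_inverse A12) * A11 = mat N r (\<lambda>(i,j). gauss_jordan_single Ch $$ (i,N+j))"
    "the (mat_inverse A12) \<in> carrier_mat N N"
proof -
  define C where "C = gauss_jordan_single Ch"
  note gj = gauss_jordan_single[OF Ch C_def[symmetric]]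
  from gj(4) obtain P Q where CP: "C = P * Ch" and P: "P \<in> carrier_mat N N" and Q: "Q \<in> carrier_mat N N"
    and PQ: "P * Q = 1\<^sub>m N" and QP: "Q * P = 1\<^sub>m N" by auto
  have Cc: "C \<in> carrier_mat N (N + r)" using gj(2) .
  have A12c: "A12 \<in> carrier_mat N N" and A11c: "A11 \<in> carrier_mat N r" using A12 A11 by auto
  have A12U: "A12 \<in> Units (ring_mat TYPE('a) N ())"
  proof -
    from inv obtain B where "A12 * B = 1\<^sub>m (dim_row A12)" "B * A12 = 1\<^sub>m (dim_row B)"
      unfolding invertible_mat_def inverts_mat_def by auto
    moreover have "dim_row B = N" using calculation(2) A12c
      by (metis carrier_matD(2) index_mult_mat(3) index_one_mat(3))
    moreover have "dim_col B = N" using calculation(1) A12c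
      by (metis carrier_matD(1) index_mult_mat(3) index_one_mat(3) index_mult_mat(3) index_one_mat(2) index_mult_mat(2))
    ultimately show ?thesis using A12c unfolding Units_def ring_mat_def by (auto intro!: bexI[of _ B])
  qed
  obtain B where mi: "mat_inverse A12 = Some B"
    using mat_inverse(1)[OF A12c, of "()"] A12U by (cases "mat_inverse A12") auto
  from mat_inverse(2)[OF A12c mi] have AB: "A12 * B = 1\<^sub>m N" and BA: "B * A12 = 1\<^sub>m N"
    and Bc: "B \<in> carrier_mat N N" by auto
  define L where "L = mat N N (\<lambda>(i,j). C $$ (i,j))"
  define R where "R = mat N r (\<lambda>(i,j). C $$ (i,N+j))"
  have LP: "L = P * A12"
  proof (rule eq_matI)
    fix i j assume ij: "i < dim_row (P * A12)" "j < dim_col (P * A12)"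
    then have i: "i < N" and j: "j < N" using P A12c by auto
    have "col A12 j = col Ch j" using j Ch by (auto simp: A12 intro!: eq_vecI)
    then show "L $$ (i,j) = (P * A12) $$ (i,j)" using i j P Ch A12c
      by (simp add: L_def CP)
  qed (use P A12c in \<open>auto simp: L_def\<close>)
  have RP: "R = P * A11"
  proof (rule eq_matI)
    fix i j assume ij: "i < dim_row (P * A11)" "j < dim_col (P * A11)"
    then have i: "i < N" and j: "j < r" using P A11c by auto
    have "col A11 j = col Ch (N + j)" using j Ch by (auto simp: A11 intro!: eq_vecI)
    then show "R $$ (i,j) = (P * A11) $$ (i,j)" using i j P Ch A11c
      by (simp add: R_def CP)
  qed (use P A11c in \<open>auto simp: R_def\<close>)
  have Lc: "L \<in> carrier_mat N N" by (simp add: L_def)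
  have refL: "row_echelon_form L" unfolding L_def by (rule ref_restrict[OF Cc _ gj(3)]) simp
  have LBQ: "L * (B * Q) = 1\<^sub>m N"
  proof -
    have "L * (B * Q) = P * (A12 * B) * Q" unfolding LP using P A12c Bc Q
      by (simp add: assoc_mult_mat[of _ N N _ N _ N])
    also have "\<dots> = 1\<^sub>m N" using AB PQ P by simp
    finally show ?thesis .
  qed
  have "L = 1\<^sub>m N"
  proof -
    from row_echelon_form_imp_1_or_0_row[OF Lc refL]
    have "L = 1\<^sub>m N \<or> (N > 0 \<and> row L (N - 1) = 0\<^sub>v N)" .
    moreover
    { assume *: "N > 0" "row L (N - 1) = 0\<^sub>v N"
      have BQc: "B * Q \<in> carrier_mat N N" using Bc Q by simp
      have "(L * (B * Q)) $$ (N-1, N-1) = row L (N - 1) \<bullet> col (B * Q) (N - 1)"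
        using *(1) Lc BQc by (subst index_mult_mat) auto
      also have "\<dots> = 0" unfolding *(2) by (rule scalar_prod_left_zero) (rule carrier_vecI, insert Bc, simp)
      finally have False using LBQ * by simp }
    ultimately show ?thesis by blast
  qed
  then have PA: "P * A12 = 1\<^sub>m N" using LP by simp
  have "B = P"
  proof -
    have "P = P * (A12 * B)" using AB P by simp
    also have "\<dots> = (P * A12) * B" using P A12c Bc by (simp add: assoc_mult_mat)
    also have "\<dots> = B" using PA Bc by simp
    finally show ?thesis by simp
  qed
  then show "the (mat_inverse A12) * A11 = mat N r (\<lambda>(i,j). gauss_jordan_single Ch $$ (i,N+j))"
    using mi RP by (simp add: R_def C_def)
  show "the (mat_inverse A12) \<in> carrier_mat N N" using mi Bc by simp
qed

theorem proposition2:
  fixes n :: nat and fs :: "cpoly list"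
    and ba :: "mon list" and br :: "mon list" and Be :: "mon set" and be_hat :: "mon list"
    and T :: "nat \<Rightarrow> mon set" and rows :: "(nat \<times> mon) list"
    and A21 :: "complex mat" and A22 :: "complex mat"
  assumes n: "n \<ge> 1"
    and fs_vars: "\<forall>i<length fs. in_vars n (fs ! i)"
    and basis: "quotient_basis n fs ba"
    and br_def: "distinct br" "set br = {\<alpha> + e1 | \<alpha>. \<alpha> \<in> set ba} - set ba"
    and T_fin: "\<forall>i<length fs. finite (T i) \<and> (\<forall>t\<in>T i. in_vars n (xmon t))"
    and split: "(\<Union>i<length fs. \<Union>t\<in>T i. Poly_Mapping.keys (xmon t * fs ! i)) = Be \<union> set br \<union> set ba"
      "Be \<inter> set br = {}" "Be \<inter> set ba = {}" "set br \<inter> set ba = {}"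
    and be_hat: "distinct be_hat" "set be_hat \<subseteq> Be"
    and rows: "distinct rows" "set rows = {(i, t). i < length fs \<and> t \<in> T i}"
    and rows_len: "length rows = length be_hat + length br"
  defines "ne \<equiv> length be_hat" and "nr \<equiv> length br" and "r \<equiv> length ba"
  defines "Chat \<equiv> mat (length rows) (length (be_hat @ br @ ba))
              (\<lambda>(k, l). Poly_Mapping.lookup (xmon (snd (rows ! k)) * fs ! fst (rows ! k)) ((be_hat @ br @ ba) ! l))"
  defines "A12 \<equiv> mat (ne + nr) (ne + nr) (\<lambda>(i, j). Chat $$ (i, j))"
    and "A11 \<equiv> mat (ne + nr) r (\<lambda>(i, j). Chat $$ (i, ne + nr + j))"
    and "C22 \<equiv> mat nr nr (\<lambda>(i, j). Chat $$ (ne + i, ne + j))"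
  assumes C22_inv: "invertible_mat C22"
    and A12_inv: "invertible_mat A12"
  defines "G \<equiv> gauss_jordan_single Chat"
  defines "C13' \<equiv> mat ne r (\<lambda>(i, j). G $$ (i, ne + nr + j))"
    and "C23' \<equiv> mat nr r (\<lambda>(i, j). G $$ (ne + i, ne + nr + j))"
  defines "Mf \<equiv> mat r r (\<lambda>(j, i).
              if ba ! j + e1 \<in> set ba then (if ba ! i = ba ! j + e1 then 1 else 0)
              else - C23' $$ (THE k. k < nr \<and> br ! k = ba ! j + e1, i))"
  assumes A21: "A21 \<in> carrier_mat r r" and A22: "A22 \<in> carrier_mat r (ne + nr)"
    and lower_block: "\<forall>u0 j l. j < r \<longrightarrow> l < r + ne + nr \<longrightarrow>
          Poly_Mapping.lookup (xmon (ba ! j) * (x1 - cconst u0)) ((ba @ be_hat @ br) ! l) =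
          (if l < r then (A21 - u0 \<cdot>\<^sub>m 1\<^sub>m r) $$ (j, l) else A22 $$ (j, l - r))"
  defines "A12inv \<equiv> the (mat_inverse A12)"
  defines "X \<equiv> A21 - A22 * A12inv * A11"
  shows "X = Mf \<and>
         A12inv * A11 = four_block_mat C13' (0\<^sub>m ne 0) C23' (0\<^sub>m nr 0) \<and>
         Chat \<in> carrier_mat (dim_row A11) (dim_col A11 + dim_col A12)"
proof -
  define N where "N = ne + nr"
  have Chc: "Chat \<in> carrier_mat N (N + r)"
    by (simp add: Chat_def rows_len ne_def nr_def r_def N_def add.assoc)
  have Rm: "A12inv * A11 = mat N r (\<lambda>(i,j). G $$ (i, N + j))"
    using gj_block(1)[OF Chc meta_eq_to_obj_eq[OF A12_def[folded N_def]] meta_eq_to_obj_eq[OF A11_def[folded N_def]] A12_inv]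
    unfolding A12inv_def G_def N_def .
  have A12ic: "A12inv \<in> carrier_mat N N"
    using gj_block(2)[OF Chc meta_eq_to_obj_eq[OF A12_def[folded N_def]] meta_eq_to_obj_eq[OF A11_def[folded N_def]] A12_inv]
    unfolding A12inv_def G_def N_def .
  have Rm_idx: "(A12inv * A11) $$ (i, j) = G $$ (i, N + j)" if "i < N" "j < r" for i j
    using that by (simp add: Rm)
  have claim2: "A12inv * A11 = four_block_mat C13' (0\<^sub>m ne 0) C23' (0\<^sub>m nr 0)"
  proof (rule eq_matI)
    fix i j assume "i < dim_row (four_block_mat C13' (0\<^sub>m ne 0) C23' (0\<^sub>m nr 0))"
      "j < dim_col (four_block_mat C13' (0\<^sub>m ne 0) C23' (0\<^sub>m nr 0))"
    then have i: "i < N" and j: "j < r" by (auto simp: C13'_def C23'_def N_def)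
    show "(A12inv * A11) $$ (i, j) = four_block_mat C13' (0\<^sub>m ne 0) C23' (0\<^sub>m nr 0) $$ (i, j)"
      using i j by (auto simp: Rm_idx C13'_def C23'_def N_def)
  qed (auto simp: Rm C13'_def C23'_def N_def)
  have claim3: "Chat \<in> carrier_mat (dim_row A11) (dim_col A11 + dim_col A12)"
    using Chc by (simp add: A11_def A12_def N_def add.commute)
  have Rmc: "A12inv * A11 \<in> carrier_mat N r" by (simp add: Rm)
  have A21e: "A21 $$ (j, l) = (if ba ! l = ba ! j + e1 then 1 else 0)" if "j < r" "l < r" for j l
  proof -
    have "Poly_Mapping.lookup (xmon (ba ! j) * (x1 - cconst 0)) ((ba @ be_hat @ br) ! l) =
          (A21 - 0 \<cdot>\<^sub>m 1\<^sub>m r) $$ (j, l)"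
      using lower_block that by auto
    moreover have "(ba @ be_hat @ br) ! l = ba ! l" using that by (simp add: nth_append r_def)
    moreover have "(A21 - 0 \<cdot>\<^sub>m 1\<^sub>m r) $$ (j, l) = A21 $$ (j, l)" using that A21 by simp
    ultimately show ?thesis by (simp add: lookup_x1 eq_commute)
  qed
  have A22e: "A22 $$ (j, k) = (if (be_hat @ br) ! k = ba ! j + e1 then 1 else 0)" if "j < r" "k < N" for j k
  proof -
    have "Poly_Mapping.lookup (xmon (ba ! j) * (x1 - cconst 0)) ((ba @ be_hat @ br) ! (r + k)) =
          (if r + k < r then (A21 - 0 \<cdot>\<^sub>m 1\<^sub>m r) $$ (j, r + k) else A22 $$ (j, r + k - r))"
      using lower_block that by (auto simp: N_def)
    moreover have "(ba @ be_hat @ br) ! (r + k) = (be_hat @ br) ! k" by (simp add: nth_append r_def)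
    ultimately show ?thesis by (simp add: lookup_x1 eq_commute)
  qed
  have claim1: "X = Mf"
  proof (rule eq_matI)
    show "dim_row X = dim_row Mf" using A21 A22 by (simp add: X_def Mf_def)
    show "dim_col X = dim_col Mf" using A21 A22 by (simp add: X_def Mf_def A11_def)
    fix j i assume "j < dim_row Mf" "i < dim_col Mf"
    then have j: "j < r" and i: "i < r" by (auto simp: Mf_def)
    define a where "a = ba ! j + e1"
    have Xe: "X $$ (j, i) = A21 $$ (j, i) - (\<Sum>k<N. A22 $$ (j, k) * (A12inv * A11) $$ (k, i))"
    proof -
      have "X $$ (j, i) = A21 $$ (j, i) - (A22 * (A12inv * A11)) $$ (j, i)"
        
      proof -
        have A11c: "A11 \<in> carrier_mat N r" by (simp add: A11_def N_def)
        have as: "A22 * A12inv * A11 = A22 * (A12inv * A11)"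
          using A22 A12ic A11c by (intro assoc_mult_mat[of A22 r N A12inv N A11 r]) (auto simp: N_def)
        have Mc: "A22 * (A12inv * A11) \<in> carrier_mat r r" using A22 Rmc by (simp add: N_def)
        show ?thesis unfolding X_def as
          by (rule index_minus_mat(1)) (use Mc i j in auto)
      qed
      also have "(A22 * (A12inv * A11)) $$ (j, i) = (\<Sum>k<N. A22 $$ (j, k) * (A12inv * A11) $$ (k, i))"
      proof -
        have "(A22 * (A12inv * A11)) $$ (j, i) = row A22 j \<bullet> col (A12inv * A11) i"
          using A22 Rmc i j by (subst index_mult_mat(1)) auto
        also have "\<dots> = (\<Sum>k\<in>{0..<N}. row A22 j $ k * col (A12inv * A11) i $ k)"
          using Rmc unfolding scalar_prod_def by auto
        also have "\<dots> = (\<Sum>k<N. A22 $$ (j, k) * (A12inv * A11) $$ (k, i))"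
          unfolding lessThan_atLeast0[symmetric]
        proof (rule sum.cong)
          fix k assume k: "k \<in> {..<N}"
          have d1: "j < dim_row A22" "k < dim_col A22" using A22 j k by (auto simp: N_def)
          have d2: "k < dim_row (A12inv * A11)" "i < dim_col (A12inv * A11)"
            using carrier_matD[OF Rmc] i k by auto
          show "row A22 j $ k * col (A12inv * A11) i $ k = A22 $$ (j, k) * (A12inv * A11) $$ (k, i)"
            using index_row(1)[OF d1] index_col[OF d2] by simp
        qed simp
        finally show ?thesis .
      qed
      finally show ?thesis .
    qed
    show "X $$ (j, i) = Mf $$ (j, i)"
    proof (cases "a \<in> set ba")
      case True
      have "A22 $$ (j, k) = 0" if "k < N" for k
      proof -
        have "(be_hat @ br) ! k \<in> set be_hat \<union> set br" using that
          by (metis N_def ne_def nr_def length_append nth_mem set_append)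
        then have "(be_hat @ br) ! k \<noteq> a" using True split(3,4) be_hat(2) by blast
        then show ?thesis using A22e[OF j that] by (simp add: a_def)
      qed
      then show ?thesis using True i j by (simp add: Xe A21e Mf_def a_def[symmetric])
    next
      case False
      have "a \<in> set br" using False j by (auto simp: br_def(2) a_def r_def)
      then obtain k0 where k0: "k0 < nr" "br ! k0 = a" by (auto simp: in_set_conv_nth nr_def)
      have the: "(THE k. k < nr \<and> br ! k = a) = k0"
        using k0 br_def(1) by (auto simp: nth_eq_iff_index_eq nr_def)
      have A21z: "A21 $$ (j, i) = 0" using A21e[OF j i] False i by (metis a_def nth_mem r_def)
      have A22d: "A22 $$ (j, k) = (if k = ne + k0 then 1 else 0)" if "k < N" for k
      proof (cases "k < ne")
        case True
        have "be_hat ! k \<in> Be" using True be_hat(2) by (auto simp: ne_def)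
        then have "be_hat ! k \<noteq> a" using \<open>a \<in> set br\<close> split(2) by blast
        then show ?thesis using A22e[OF j that] True by (simp add: nth_append ne_def a_def)
      next
        case False
        have "k - ne < nr" using that False by (simp add: N_def)
        then have "(br ! (k - ne) = a) = (k - ne = k0)"
          using k0 br_def(1) by (auto simp: nth_eq_iff_index_eq nr_def)
        then show ?thesis using A22e[OF j that] False by (auto simp: nth_append ne_def a_def)
      qed
      have "(\<Sum>k<N. A22 $$ (j, k) * (A12inv * A11) $$ (k, i)) = (A12inv * A11) $$ (ne + k0, i)"
      proof -
        have "(\<Sum>k<N. A22 $$ (j, k) * (A12inv * A11) $$ (k, i)) =
              (\<Sum>k<N. (if k = ne + k0 then (A12inv * A11) $$ (k, i) else 0))"
          by (rule sum.cong) (auto simp: A22d)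
        also have "\<dots> = (A12inv * A11) $$ (ne + k0, i)" using k0 by (simp add: N_def)
        finally show ?thesis .
      qed
      also have "\<dots> = C23' $$ (k0, i)" using k0 i by (simp add: Rm_idx N_def C23'_def)
      finally show ?thesis using False i j
        by (simp add: Xe A21z Mf_def a_def[symmetric] the)
    qed
  qed
  show ?thesis using claim1 claim2 claim3 by blast
qed

end
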